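(* For the monomial symmetric polynomials $m_\mu=m_\mu(L_1,L_2,L_3,L_4)$ in $\mathbb Z S_4$: (1) for $i\ge 7$, $m_i=14m_{i-2}-49m_{i-4}+36m_{i-6}$; (2) for $i\ge 6$, $m_{i,i}=8m_{i-1,i-1}-5m_{i-2,i-2}-50m_{i-3,i-3}+36m_{i-4,i-4}+72m_{i-5,i-5}$; (3) for $i\ge 5$, $m_{i,i,i}=40m_{i-2,i-2,i-2}-144m_{i-4,i-4,i-4}$.
   Context: $S_4$ is the symmetric group on $\{1,2,3,4\}$, $\mathbb Z S_4$ its integral group ring. The Jucys–Murphy elements are $L_1=0$ and $L_i=\sum_{k=1}^{i-1}(k\ i)$ for $i=2,3,4$; they pairwise commute. For a partition $\mu=(\mu_1,\dots,\mu_r)$, $m_\mu(x_1,\dots,x_4)$ is the monomial symmetric polynomial: the sum of all distinct monomials $x_1^{\alpha_1}\cdots x_4^{\alpha_4}$ with $(\alpha_1,\dots,\alpha_4)$ a rearrangement of $(\mu_1,\dots,\mu_r,0,\dots,0)$ ($m_\mu=0$ if $r>4$, and $m_\emptyset=1$). We write $m_\mu$ for $m_\mu(L_1,L_2,L_3,L_4)$ and omit parentheses in subscripts, e.g. $m_{i,i}=m_{(i,i)}$. *)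

theory Defs
  imports "HOL-Combinatorics.Combinatorics"
begin

text \<open>The integral group ring Z S4 is represented by functions from permutations to int,
  supported on S4 (coefficient of each group element).\<close>

definition S4 :: "(nat \<Rightarrow> nat) set" where
  "S4 = {p. p permutes {1..4::nat}}"

type_synonym zs4 = "(nat \<Rightarrow> nat) \<Rightarrow> int"

definition gbasis :: "(nat \<Rightarrow> nat) \<Rightarrow> zs4" where
  "gbasis p = (\<lambda>s. if s = p then 1 else 0)"

definition gone :: zs4 where
  "gone = gbasis id"

text \<open>Convolution product: gbasis a * gbasis b = gbasis (a o b).\<close>
definition gmul :: "zs4 \<Rightarrow> zs4 \<Rightarrow> zs4" where
  "gmul f g = (\<lambda>s. if s \<in> S4 then (\<Sum>t\<in>S4. f t * g (inv t \<circ> s)) else 0)"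

primrec gpow :: "zs4 \<Rightarrow> nat \<Rightarrow> zs4" where
  "gpow f 0 = gone"
| "gpow f (Suc n) = gmul f (gpow f n)"

text \<open>Jucys--Murphy elements L_i = sum_{k=1}^{i-1} (k i); L_1 = 0.\<close>
definition JM :: "nat \<Rightarrow> zs4" where
  "JM i = (\<lambda>s. \<Sum>k\<in>{1..<i}. gbasis (transpose k i) s)"

text \<open>The monomial L_1^(a!0) L_2^(a!1) L_3^(a!2) L_4^(a!3) for an exponent list a of length 4.\<close>
definition JMmono :: "nat list \<Rightarrow> zs4" where
  "JMmono a = foldr (\<lambda>j acc. gmul (gpow (JM (j + 1)) (a ! j)) acc) [0..<4] gone"

text \<open>Monomial symmetric polynomial m_mu(L_1,...,L_4), mu given as a list of parts:
  sum over all distinct exponent vectors which are rearrangements of mu padded by zeros;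
  zero if mu has more than 4 parts.\<close>
definition msym :: "nat list \<Rightarrow> zs4" where
  "msym mu = (if length mu > 4 then (\<lambda>_. 0) else
     (\<lambda>s. \<Sum>a\<in>{a. length a = 4 \<and> mset a = mset (mu @ replicate (4 - length mu) 0)}. JMmono a s))"

end

theory Submission
  imports Defs
begin

definition plist :: "nat list list" where
  "plist = [[1, 2, 3, 4], [1, 2, 4, 3], [1, 3, 2, 4], [1, 3, 4, 2], [1, 4, 2, 3], [1, 4, 3, 2], [2, 1, 3, 4], [2, 1, 4, 3], [2, 3, 1, 4], [2, 3, 4, 1], [2, 4, 1, 3], [2, 4, 3, 1], [3, 1, 2, 4], [3, 1, 4, 2], [3, 2, 1, 4], [3, 2, 4, 1], [3, 4, 1, 2], [3, 4, 2, 1], [4, 1, 2, 3], [4, 1, 3, 2], [4, 2, 1, 3], [4, 2, 3, 1], [4, 3, 1, 2], [4, 3, 2, 1]]"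

definition ltabl :: "nat list list" where
  "ltabl = [[0, 1, 2, 3, 4, 5, 6, 7, 8, 9, 10, 11, 12, 13, 14, 15, 16, 17, 18, 19, 20, 21, 22, 23], [1, 0, 4, 5, 2, 3, 7, 6, 10, 11, 8, 9, 18, 19, 20, 21, 22, 23, 12, 13, 14, 15, 16, 17], [2, 3, 0, 1, 5, 4, 12, 13, 14, 15, 16, 17, 6, 7, 8, 9, 10, 11, 19, 18, 22, 23, 20, 21], [4, 5, 1, 0, 3, 2, 18, 19, 20, 21, 22, 23, 7, 6, 10, 11, 8, 9, 13, 12, 16, 17, 14, 15], [3, 2, 5, 4, 0, 1, 13, 12, 16, 17, 14, 15, 19, 18, 22, 23, 20, 21, 6, 7, 8, 9, 10, 11], [5, 4, 3, 2, 1, 0, 19, 18, 22, 23, 20, 21, 13, 12, 16, 17, 14, 15, 7, 6, 10, 11, 8, 9], [6, 7, 8, 9, 10, 11, 0, 1, 2, 3, 4, 5, 14, 15, 12, 13, 17, 16, 20, 21, 18, 19, 23, 22], [7, 6, 10, 11, 8, 9, 1, 0, 4, 5, 2, 3, 20, 21, 18, 19, 23, 22, 14, 15, 12, 13, 17, 16], [12, 13, 14, 15, 16, 17, 2, 3, 0, 1, 5, 4, 8, 9, 6, 7, 11, 10, 22, 23, 19, 18, 21, 20], [18, 19, 20, 21, 22, 23, 4, 5, 1, 0, 3, 2, 10, 11, 7, 6, 9, 8, 16, 17, 13, 12, 15, 14], [13, 12, 16, 17, 14, 15, 3, 2, 5, 4, 0, 1, 22, 23, 19, 18, 21, 20, 8,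 9, 6, 7, 11, 10], [19, 18, 22, 23, 20, 21, 5, 4, 3, 2, 1, 0, 16, 17, 13, 12, 15, 14, 10, 11, 7, 6, 9, 8], [8, 9, 6, 7, 11, 10, 14, 15, 12, 13, 17, 16, 0, 1, 2, 3, 4, 5, 21, 20, 23, 22, 18, 19], [10, 11, 7, 6, 9, 8, 20, 21, 18, 19, 23, 22, 1, 0, 4, 5, 2, 3, 15, 14, 17, 16, 12, 13], [14, 15, 12, 13, 17, 16, 8, 9, 6, 7, 11, 10, 2, 3, 0, 1, 5, 4, 23, 22, 21, 20, 19, 18], [20, 21, 18, 19, 23, 22, 10, 11, 7, 6, 9, 8, 4, 5, 1, 0, 3, 2, 17, 16, 15, 14, 13, 12], [16, 17, 13, 12, 15, 14, 22, 23, 19, 18, 21, 20, 3, 2, 5, 4, 0, 1, 9, 8, 11, 10, 6, 7], [22, 23, 19, 18, 21, 20, 16, 17, 13, 12, 15, 14, 5, 4, 3, 2, 1, 0, 11, 10, 9, 8, 7, 6], [9, 8, 11, 10, 6, 7, 15, 14, 17, 16, 12, 13, 21, 20, 23, 22, 18, 19, 0, 1, 2, 3, 4, 5], [11, 10, 9, 8, 7, 6, 21, 20, 23, 22, 18, 19, 15, 14, 17, 16, 12, 13, 1, 0, 4, 5, 2, 3], [15, 14, 17, 16, 12, 13, 9, 8, 11, 10, 6, 7, 23, 22, 21, 20, 19, 18, 2, 3, 0, 1, 5, 4], [21, 20, 23, 22, 18, 19, 11, 10, 9, 8, 7, 6, 17, 16, 15, 14, 13, 12, 4, 5, 1, 0,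 3, 2], [17, 16, 15, 14, 13, 12, 23, 22, 21, 20, 19, 18, 9, 8, 11, 10, 6, 7, 3, 2, 5, 4, 0, 1], [23, 22, 21, 20, 19, 18, 17, 16, 15, 14, 13, 12, 11, 10, 9, 8, 7, 6, 5, 4, 3, 2, 1, 0]]"

definition cmul :: "int list \<Rightarrow> int list \<Rightarrow> int list" where
 "cmul x y = map (\<lambda>k. sum_list (map (\<lambda>i. x!i * y!(ltabl!i!k)) [0..<24])) [0..<24]"
definition onec :: "int list" where "onec = 1 # replicate 23 0"
definition jmc :: "nat \<Rightarrow> int list" where
 "jmc j = map (\<lambda>i. sum_list (map (\<lambda>k. if plist!i = map (transpose k j) [1,2,3,4] then 1 else 0) [1..<j])) [0..<24]"
fun powsfrom :: "int list \<Rightarrow> int list \<Rightarrow> nat \<Rightarrow> int list list" where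
 "powsfrom x v 0 = [v]" | "powsfrom x v (Suc n) = v # powsfrom x (cmul x v) n"
definition vadd :: "int list \<Rightarrow> int list \<Rightarrow> int list" where "vadd a b = map (\<lambda>k. a!k + b!k) [0..<24]"
fun lcomb :: "int list \<Rightarrow> int list list \<Rightarrow> int list" where
 "lcomb (c#cs) (v#vs) = vadd (map (\<lambda>a. c*a) v) (lcomb cs vs)" | "lcomb _ _ = replicate 24 0"
definition chk :: "int list \<Rightarrow> int list list \<Rightarrow> bool" where
 "chk cs ps = (last ps = lcomb cs (butlast (tl ps)))"




definition supp4 :: "zs4 \<Rightarrow> bool" where "supp4 f = (\<forall>s. s \<notin> S4 \<longrightarrow> f s = 0)"

lemma S4_fin: "finite S4" unfolding S4_def by (simp add: finite_permutations)
lemma S4_perm: "s \<in> S4 \<Longrightarrow> s permutes {1..4}" unfolding S4_def by simp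
lemma S4_id: "id \<in> S4" unfolding S4_def by (simp add: permutes_id)
lemma S4_inv: "s \<in> S4 \<Longrightarrow> inv s \<in> S4" unfolding S4_def by (simp add: permutes_inv)
lemma S4_comp: "s \<in> S4 \<Longrightarrow> t \<in> S4 \<Longrightarrow> s \<circ> t \<in> S4" unfolding S4_def by (simp add: permutes_compose)

lemma supp4_gmul[simp]: "supp4 (gmul f g)" unfolding supp4_def gmul_def by simp
lemma supp4_gone[simp]: "supp4 gone" unfolding supp4_def gone_def gbasis_def using S4_id by auto
lemma supp4_gpow[simp]: "supp4 (gpow f n)" by (cases n) auto

lemma gmul_gone_left: assumes "supp4 g" shows "gmul gone g = g"
proof
  fix s show "gmul gone g s = g s"
  proof (cases "s \<in> S4")
    case True
    have "(\<Sum>t\<in>S4. gone t * g (inv t \<circ> s)) = (\<Sum>t\<in>S4. if t = id then g (inv t \<circ> s) else 0)"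
      by (rule sum.cong) (auto simp: gone_def gbasis_def)
    also have "\<dots> = g s" using S4_id S4_fin by (simp add: sum.delta)
    finally show ?thesis using True by (simp add: gmul_def)
  next
    case False then show ?thesis using assms by (simp add: gmul_def supp4_def)
  qed
qed

lemma gmul_gone_right: assumes "supp4 f" shows "gmul f gone = f"
proof
  fix s show "gmul f gone s = f s"
  proof (cases "s \<in> S4")
    case True
    have "(\<Sum>t\<in>S4. f t * gone (inv t \<circ> s)) = (\<Sum>t\<in>S4. if t = s then f t else 0)"
    proof (rule sum.cong)
      fix t assume t: "t \<in> S4"
      have "(inv t \<circ> s = id) = (t = s)"
      proof
        assume "inv t \<circ> s = id"
        then have "t \<circ> (inv t \<circ> s) = t" by simp
        then show "t = s" using S4_perm[OF t] by (simp add: o_assoc permutes_inv_o)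
      next
        assume "t = s" then show "inv t \<circ> s = id" using S4_perm[OF t] by (simp add: permutes_inv_o)
      qed
      then show "f t * gone (inv t \<circ> s) = (if t = s then f t else 0)"
        by (auto simp: gone_def gbasis_def)
    qed simp
    also have "\<dots> = f s" using True S4_fin by (simp add: sum.delta')
    finally show ?thesis using True by (simp add: gmul_def)
  next
    case False then show ?thesis using assms by (simp add: gmul_def supp4_def)
  qed
qed

lemma gmul_assoc: "gmul (gmul f g) h = gmul f (gmul g h)"
proof
  fix s show "gmul (gmul f g) h s = gmul f (gmul g h) s"
  proof (cases "s \<in> S4")
    case False then show ?thesis by (simp add: gmul_def)
  next
    case True
    have inner: "(\<Sum>t\<in>S4. g (inv u \<circ> t) * h (inv t \<circ> s)) = (\<Sum>v\<in>S4. g v * h (inv v \<circ> (inv u \<circ> s)))"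
      if u: "u \<in> S4" for u
    proof (rule sum.reindex_bij_witness[where i = "\<lambda>v. u \<circ> v" and j = "\<lambda>t. inv u \<circ> t"])
      have pu: "u permutes {1..4}" using S4_perm[OF u] .
      fix v assume v: "v \<in> S4"
      show "inv u \<circ> (u \<circ> v) = v" using pu by (simp add: o_assoc permutes_inv_o)
      show "u \<circ> v \<in> S4" using u v by (rule S4_comp)
    next
      fix t assume t: "t \<in> S4"
      have pu: "u permutes {1..4}" using S4_perm[OF u] .
      show "u \<circ> (inv u \<circ> t) = t" using pu by (metis o_assoc permutes_inv_o(1) id_o)
      show "inv u \<circ> t \<in> S4" using S4_comp[OF S4_inv[OF u] t] .
      have pt: "t permutes {1..4}" using S4_perm[OF t] .
      have "inv (inv u \<circ> t) = inv t \<circ> u"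
        using pu pt by (simp add: o_inv_distrib permutes_bij permutes_inv inv_inv_eq bij_imp_bij_inv)
      moreover have "inv t \<circ> u \<circ> (inv u \<circ> s) = inv t \<circ> s"
        using pu by (simp add: o_assoc[symmetric]) (simp add: o_assoc permutes_inv_o)
      ultimately show "g (inv u \<circ> t) * h (inv (inv u \<circ> t) \<circ> (inv u \<circ> s)) = g (inv u \<circ> t) * h (inv t \<circ> s)"
        by simp
    qed
    have "gmul (gmul f g) h s = (\<Sum>t\<in>S4. (\<Sum>u\<in>S4. f u * g (inv u \<circ> t)) * h (inv t \<circ> s))"
      using True by (simp add: gmul_def)
    also have "\<dots> = (\<Sum>t\<in>S4. \<Sum>u\<in>S4. f u * (g (inv u \<circ> t) * h (inv t \<circ> s)))"
      by (simp add: sum_distrib_right mult.assoc)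
    also have "\<dots> = (\<Sum>u\<in>S4. \<Sum>t\<in>S4. f u * (g (inv u \<circ> t) * h (inv t \<circ> s)))"
      by (rule sum.swap)
    also have "\<dots> = (\<Sum>u\<in>S4. f u * (\<Sum>v\<in>S4. g v * h (inv v \<circ> (inv u \<circ> s))))"
      by (rule sum.cong) (simp_all add: sum_distrib_left[symmetric] inner)
    also have "\<dots> = gmul f (gmul g h) s"
      using True by (simp add: gmul_def S4_comp S4_inv)
    finally show ?thesis .
  qed
qed

lemma gmul_lin: "gmul f (\<lambda>s. \<Sum>l\<in>L. c l * g l s) = (\<lambda>s. \<Sum>l\<in>L. c l * gmul f (g l) s)"
proof
  fix s show "gmul f (\<lambda>s. \<Sum>l\<in>L. c l * g l s) s = (\<Sum>l\<in>L. c l * gmul f (g l) s)"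
    by (auto simp: gmul_def sum_distrib_left sum_distrib_right mult.assoc mult.left_commute intro: sum.swap)
qed

lemma gpow_comm: assumes "gmul A B = gmul B A" "supp4 B"
  shows "gmul (gpow A n) B = gmul B (gpow A n)"
proof (induction n)
  case 0 then show ?case using assms by (simp add: gmul_gone_left gmul_gone_right)
next
  case (Suc n)
  have "gmul (gpow A (Suc n)) B = gmul A (gmul (gpow A n) B)" by (simp add: gmul_assoc)
  also have "\<dots> = gmul (gmul A B) (gpow A n)" by (simp add: Suc gmul_assoc)
  also have "\<dots> = gmul B (gpow A (Suc n))" by (simp add: assms(1) gmul_assoc)
  finally show ?case .
qed

lemma gpow_pair: assumes "gmul A B = gmul B A" "supp4 B"
  shows "gmul (gpow A n) (gpow B n) = gpow (gmul A B) n"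
proof (induction n)
  case 0 then show ?case by (simp add: gmul_gone_left)
next
  case (Suc n)
  have "gmul (gpow A (Suc n)) (gpow B (Suc n)) = gmul A (gmul (gmul (gpow A n) B) (gpow B n))"
    by (simp add: gmul_assoc)
  also have "\<dots> = gmul (gmul A B) (gmul (gpow A n) (gpow B n))"
    by (simp add: gpow_comm[OF assms] gmul_assoc)
  finally show ?case using Suc by simp
qed

lemma gpow_rec:
  assumes "gpow C (d+1) = (\<lambda>s. \<Sum>l<d. c l * gpow C (l+1) s)"
  shows "gpow C (d+m+1) = (\<lambda>s. \<Sum>l<d. c l * gpow C (l+m+1) s)"
proof (induction m)
  case 0 then show ?case using assms by simp
next
  case (Suc m)
  have "gpow C (d + Suc m + 1) = gmul C (gpow C (d+m+1))" by simp
  also have "\<dots> = (\<lambda>s. \<Sum>l<d. c l * gmul C (gpow C (l+m+1)) s)" by (simp only: Suc gmul_lin)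
  finally show ?case by simp
qed




definition toP :: "nat list \<Rightarrow> nat \<Rightarrow> nat" where
  "toP xs n = (if n \<in> {1..4} then xs!(n-1) else n)"
definition fP :: "nat \<Rightarrow> nat \<Rightarrow> nat" where "fP i = toP (plist!i)"
definition absv :: "int list \<Rightarrow> zs4" where
  "absv x = (\<lambda>s. \<Sum>i<24. if s = fP i then x!i else 0)"
definition lcomp :: "nat list \<Rightarrow> nat list \<Rightarrow> nat list" where
  "lcomp a b = map (\<lambda>j. a!(j-1)) b"

lemma len4: "length a = 4 \<Longrightarrow> \<exists>w x y z. a = [w,x,y,z]"
  by (cases a; cases "tl a"; cases "tl (tl a)"; cases "tl (tl (tl a))"; auto)

lemma toP_map: "length a = 4 \<Longrightarrow> map (toP a) [1,2,3,4] = a"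
  using len4[of a] by (auto simp: toP_def)

lemma toP_inj: "length a = 4 \<Longrightarrow> length b = 4 \<Longrightarrow> toP a = toP b \<Longrightarrow> a = b"
  by (metis toP_map)

lemma toP_perm: assumes "length a = 4" "set a = {1..4}" shows "toP a permutes {1..4}"
proof -
  have img: "toP a ` {1..4} = set a"
  proof -
    have e: "{1..4::nat} = set [1,2,3,4]" by auto
    show ?thesis by (metis e list.set_map toP_map[OF assms(1)])
  qed
  then have "inj_on (toP a) {1..4}" using assms(2)
    by (intro eq_card_imp_inj_on) auto
  then have "bij_betw (toP a) {1..4} {1..4}" using img assms(2) by (simp add: bij_betw_def)
  then show ?thesis by (rule bij_imp_permutes) (auto simp: toP_def)
qed

lemma toP_comp: assumes "length b = 4" "set b \<subseteq> {1..4}"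
  shows "toP a \<circ> toP b = toP (lcomp a b)"
proof
  fix n show "(toP a \<circ> toP b) n = toP (lcomp a b) n"
  proof (cases "n \<in> {1..4}")
    case True
    then have "b!(n-1) \<in> set b" using assms(1) by auto
    then have "b!(n-1) \<in> {1..4}" using assms(2) by auto
    moreover have "n - 1 < length b" using True assms(1) by auto
    ultimately show ?thesis using True assms(1) by (simp add: toP_def lcomp_def)
  next
    case False
    have t: "\<And>f. toP f n = n" unfolding toP_def using False by (simp only: if_False)
    show ?thesis by (simp add: t)
  qed
qed

lemma plist_facts: "length plist = 24 \<and> distinct plist \<and> list_all (\<lambda>a. length a = 4 \<and> set a = {1..4}) plist"
  by code_simp

lemma ltab_facts: "list_all (\<lambda>i. list_all (\<lambda>k. ltabl!i!k < 24 \<and> lcomp (plist!i) (plist!(ltabl!i!k)) = plist!k) [0..<24]) [0..<24]"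
  by code_simp

lemma pl_len: "i < 24 \<Longrightarrow> length (plist!i) = 4" and pl_set: "i < 24 \<Longrightarrow> set (plist!i) = {1..4}"
  using plist_facts by (auto simp: list_all_iff)

lemma fP_inj: "inj_on fP {..<24}"
proof (rule inj_onI)
  fix i k assume "i \<in> {..<24}" "k \<in> {..<24}" "fP i = fP k"
  then have "plist!i = plist!k" using toP_inj pl_len by (simp add: fP_def)
  then show "i = k" using plist_facts \<open>i \<in> {..<24}\<close> \<open>k \<in> {..<24}\<close> by (simp add: nth_eq_iff_index_eq)
qed

lemma fP_S4: "i < 24 \<Longrightarrow> fP i \<in> S4"
  unfolding S4_def fP_def using toP_perm pl_len pl_set by auto

lemma S4_eq: "S4 = fP ` {..<24}"
proof -
  have sub: "fP ` {..<24} \<subseteq> S4" using fP_S4 by auto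
  have "card (fP ` {..<24}) = 24" using fP_inj by (simp add: card_image)
  moreover have "card S4 = 24" unfolding S4_def
    by (subst card_permutations[of "{1..4::nat}" 4]) (auto simp: fact_numeral)
  ultimately show ?thesis using sub S4_fin by (metis card_subset_eq)
qed

lemma ltab: assumes "i < 24" "k < 24"
  shows "ltabl!i!k < 24" "inv (fP i) \<circ> fP k = fP (ltabl!i!k)"
proof -
  have h: "ltabl!i!k < 24 \<and> lcomp (plist!i) (plist!(ltabl!i!k)) = plist!k"
    using ltab_facts assms by (simp add: list_all_iff)
  then show "ltabl!i!k < 24" by simp
  have "fP i \<circ> fP (ltabl!i!k) = fP k"
    using h toP_comp[of "plist!(ltabl!i!k)" "plist!i"] pl_len pl_set by (simp add: fP_def)
  moreover have "fP i permutes {1..4}" using fP_S4[OF assms(1)] S4_perm by blast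
  ultimately show "inv (fP i) \<circ> fP k = fP (ltabl!i!k)"
    by (metis o_assoc permutes_inv_o(2) id_o)
qed

lemma absv_at: "k < 24 \<Longrightarrow> absv x (fP k) = x!k"
proof -
  assume k: "k < 24"
  have "absv x (fP k) = (\<Sum>i<24. if i = k then x!i else 0)"
    unfolding absv_def
    by (rule sum.cong) (use k fP_inj in \<open>auto simp: inj_on_eq_iff\<close>)
  then show ?thesis using k by simp
qed

lemma supp4_absv[simp]: "supp4 (absv x)"
  unfolding supp4_def absv_def using fP_S4 by (force intro!: sum.neutral)

lemma absv_ext: assumes "supp4 f" "\<And>k. k < 24 \<Longrightarrow> f (fP k) = x!k" shows "f = absv x"
proof
  fix s show "f s = absv x s"
  proof (cases "s \<in> S4")
    case True then obtain k where "k < 24" "s = fP k" using S4_eq by auto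
    then show ?thesis using assms absv_at by simp
  next
    case False then show ?thesis using assms(1) supp4_absv unfolding supp4_def by metis
  qed
qed

lemma gmul_absv: "gmul (absv x) (absv y) = absv (cmul x y)"
proof (rule absv_ext)
  fix k :: nat assume k: "k < 24"
  have "gmul (absv x) (absv y) (fP k) = (\<Sum>t\<in>fP ` {..<24}. absv x t * absv y (inv t \<circ> fP k))"
    using fP_S4[OF k] by (simp add: gmul_def S4_eq[symmetric])
  also have "\<dots> = (\<Sum>i<24. absv x (fP i) * absv y (inv (fP i) \<circ> fP k))"
    using fP_inj by (simp add: sum.reindex)
  also have "\<dots> = (\<Sum>i<24. x!i * y!(ltabl!i!k))"
    by (rule sum.cong) (simp_all add: ltab k absv_at)
  also have "\<dots> = cmul x y ! k"
    using k by (simp add: cmul_def sum_list_sum_nth atLeast0LessThan)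
  finally show "gmul (absv x) (absv y) (fP k) = cmul x y ! k" .
qed (simp)




fun cpow :: "int list \<Rightarrow> nat \<Rightarrow> int list" where
  "cpow x 0 = onec" | "cpow x (Suc n) = cmul x (cpow x n)"

lemma len_cpow: "length (cpow x n) = 24"
  by (cases n) (auto simp: onec_def cmul_def)

lemma fP0: "fP 0 = id"
proof
  fix n show "fP 0 n = id n"
  proof (cases "n \<in> {1..4}")
    case True then have "n = 1 \<or> n = 2 \<or> n = 3 \<or> n = 4" by auto
    then show ?thesis by (elim disjE) (simp_all add: fP_def plist_def toP_def)
  next
    case False
    show ?thesis unfolding fP_def toP_def using False by (simp only: if_False id_apply)
  qed
qed

lemma gone_absv: "gone = absv onec"
proof (rule absv_ext)
  fix k :: nat assume k: "k < 24"
  have "(fP k = id) = (k = 0)" using fP0 fP_inj k by (metis inj_on_eq_iff lessThan_iff zero_less_numeral)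
  then show "gone (fP k) = onec ! k" using k
    by (cases k) (auto simp: gone_def gbasis_def onec_def)
qed simp

lemma toP_transp: assumes "k \<in> {1..4}" "j \<in> {1..4}"
  shows "toP (map (transpose k j) [1,2,3,4]) = transpose k j"
proof
  fix n show "toP (map (transpose k j) [1,2,3,4]) n = transpose k j n"
  proof (cases "n \<in> {1..4}")
    case True then have "n = 1 \<or> n = 2 \<or> n = 3 \<or> n = 4" by auto
    then show ?thesis by (elim disjE) (simp_all add: toP_def)
  next
    case False then have "n \<noteq> k" "n \<noteq> j" using assms by auto
    moreover have "toP (map (transpose k j) [1,2,3,4]) n = n" unfolding toP_def using False by (simp only: if_False)
    ultimately show ?thesis by (simp add: transpose_def)
  qed
qed

lemma JM_absv: assumes j: "j \<in> {1..4}" shows "JM j = absv (jmc j)"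
proof (rule absv_ext)
  have tS: "k \<in> {1..<j} \<Longrightarrow> transpose k j \<in> S4" for k
    using j unfolding S4_def by (auto intro!: permutes_swap_id)
  show "supp4 (JM j)" unfolding supp4_def JM_def gbasis_def using tS
    by (force intro!: sum.neutral)
  fix i :: nat assume i: "i < 24"
  have eqv: "(fP i = transpose k j) = (plist!i = map (transpose k j) [1,2,3,4])" if k: "k \<in> {1..<j}" for k
  proof
    assume "fP i = transpose k j"
    then show "plist!i = map (transpose k j) [1,2,3,4]"
      using toP_map[OF pl_len[OF i]] by (simp add: fP_def)
  next
    assume "plist!i = map (transpose k j) [1,2,3,4]"
    then show "fP i = transpose k j" using toP_transp[of k j] k j by (simp add: fP_def)
  qed
  have "JM j (fP i) = (\<Sum>k\<in>{1..<j}. if plist!i = map (transpose k j) [1,2,3,4] then 1 else 0)"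
    unfolding JM_def gbasis_def by (rule sum.cong) (simp_all add: eqv)
  also have "\<dots> = jmc j ! i" using i
    by (simp add: jmc_def sum_set_upt_conv_sum_list_nat[symmetric])
  finally show "JM j (fP i) = jmc j ! i" .
qed

lemma gpow_absv: "gpow (absv x) n = absv (cpow x n)"
  by (induction n) (simp_all add: gone_absv gmul_absv)

lemma powsfrom_eq: "powsfrom x (cpow x m) n = map (\<lambda>l. cpow x (m+l)) [0..<Suc n]"
proof (induction n arbitrary: m)
  case 0 then show ?case by simp
next
  case (Suc n)
  have "powsfrom x (cpow x m) (Suc n) = cpow x m # powsfrom x (cpow x (Suc m)) n" by simp
  also have "\<dots> = cpow x m # map (\<lambda>l. cpow x (Suc m + l)) [0..<Suc n]" by (simp only: Suc)
  also have "\<dots> = map (\<lambda>l. cpow x (m+l)) [0..<Suc (Suc n)]"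
    by (simp add: upt_conv_Cons map_Suc_upt[symmetric] del: upt_Suc)
  finally show ?case .
qed

lemma lcomb_eq: "length cs = length vs \<Longrightarrow> (\<forall>v\<in>set vs. length v = 24) \<Longrightarrow>
  lcomb cs vs = map (\<lambda>k. \<Sum>l<length cs. cs!l * vs!l!k) [0..<24]"
proof (induction cs vs rule: list_induct2)
  case Nil then show ?case by (simp add: map_replicate_const)
next
  case (Cons c cs v vs)
  then show ?case by (simp add: vadd_def sum.lessThan_Suc_shift del: sum.lessThan_Suc)
qed

lemma absv_lin: "absv (map (\<lambda>k. \<Sum>l\<in>L. c l * v l ! k) [0..<24]) = (\<lambda>s. \<Sum>l\<in>L. c l * absv (v l) s)"
proof -
  have "(\<lambda>s. \<Sum>l\<in>L. c l * absv (v l) s) = absv (map (\<lambda>k. \<Sum>l\<in>L. c l * v l ! k) [0..<24])"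
  proof (rule absv_ext)
    show "supp4 (\<lambda>s. \<Sum>l\<in>L. c l * absv (v l) s)"
      using supp4_absv unfolding supp4_def by simp
  qed (simp add: absv_at)
  then show ?thesis by simp
qed

lemma base: assumes "chk cs (powsfrom x onec (d+1))" "length cs = d"
  shows "gpow (absv x) (d+1) = (\<lambda>s. \<Sum>l<d. cs!l * gpow (absv x) (l+1) s)"
proof -
  have p: "powsfrom x onec (d+1) = map (\<lambda>l. cpow x l) [0..<Suc (Suc d)]"
    using powsfrom_eq[of x 0 "d+1"] by simp
  have bt: "butlast (tl (map (\<lambda>l. cpow x l) [0..<Suc (Suc d)])) = map (\<lambda>l. cpow x (l+1)) [0..<d]"
  proof -
    have "butlast [0..<Suc d] = [0..<d]" by simp
    then show ?thesis by (simp add: map_tl[symmetric] map_butlast[symmetric] map_Suc_upt[symmetric] comp_def del: upt_Suc)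
  qed
  have "cpow x (d+1) = lcomb cs (map (\<lambda>l. cpow x (l+1)) [0..<d])"
    using assms(1) unfolding chk_def p bt by (simp add: last_map)
  also have "\<dots> = map (\<lambda>k. \<Sum>l<d. cs!l * cpow x (l+1) ! k) [0..<24]"
    using assms(2) by (subst lcomb_eq) (auto simp: len_cpow simp del: cpow.simps)
  finally have "absv (cpow x (d+1)) = (\<lambda>s. \<Sum>l<d. cs!l * absv (cpow x (l+1)) s)"
    by (simp add: absv_lin)
  then show ?thesis by (simp only: gpow_absv)
qed




lemma JMmono4: "JMmono [a,b,c,d] = gmul (gpow (JM 1) a) (gmul (gpow (JM 2) b) (gmul (gpow (JM 3) c) (gmul (gpow (JM 4) d) gone)))"
proof -
  have u: "[0..<4] = [0::nat,1,2,3]" by (simp add: upt_rec)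
  show ?thesis unfolding JMmono_def u by (simp add: eval_nat_numeral)
qed

lemma mem4: assumes "length a = 4" "mset a = mset l" "set l \<subseteq> {i,0}"
  obtains w x y z where "a = [w,x,y,z]" "w = i \<or> w = 0" "x = i \<or> x = 0" "y = i \<or> y = 0" "z = i \<or> z = 0"
    "count_list [w,x,y,z] i = count_list l i" "count_list [w,x,y,z] 0 = count_list l 0"
proof -
  obtain w x y z where a: "a = [w,x,y,z]" using len4[OF assms(1)] by blast
  have "set a = set l" using assms(2) by (metis set_mset_mset)
  then have "set [w,x,y,z] \<subseteq> {i,0}" using a assms(3) by simp
  moreover have "count_list [w,x,y,z] v = count_list l v" for v
    using assms(2) a by (metis count_mset)
  ultimately show ?thesis using that a by auto
qed

lemma set1: assumes "i \<noteq> 0"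
  shows "{a. length a = 4 \<and> mset a = mset ([i] @ replicate (4 - length [i]) 0)} = {[i,0,0,0],[0,i,0,0],[0,0,i,0],[0,0,0,i]}"
proof (rule set_eqI, rule iffI)
  fix a assume "a \<in> {a. length a = 4 \<and> mset a = mset ([i] @ replicate (4 - length [i]) 0)}"
  then have h: "length a = 4" "mset a = mset [i,0,0,0]" by (simp_all add: numeral_eq_Suc)
  have s: "set [i,0,0,0] \<subseteq> {i,0}" by auto
  obtain w x y z where a: "a = [w,x,y,z]" and d: "w = i \<or> w = 0" "x = i \<or> x = 0" "y = i \<or> y = 0" "z = i \<or> z = 0"
    and c: "count_list [w,x,y,z] i = count_list [i,0,0,0] i" "count_list [w,x,y,z] 0 = count_list [i,0,0,0] 0"
    by (rule mem4[OF h s])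
  show "a \<in> {[i,0,0,0],[0,i,0,0],[0,0,i,0],[0,0,0,i]}"
    using d c assms unfolding a by (elim disjE; simp)
qed (auto simp: numeral_eq_Suc)

lemma set2: assumes "i \<noteq> 0"
  shows "{a. length a = 4 \<and> mset a = mset ([i,i] @ replicate (4 - length [i,i]) 0)} =
     {[i,i,0,0],[i,0,i,0],[i,0,0,i],[0,i,i,0],[0,i,0,i],[0,0,i,i]}"
proof (rule set_eqI, rule iffI)
  fix a assume "a \<in> {a. length a = 4 \<and> mset a = mset ([i,i] @ replicate (4 - length [i,i]) 0)}"
  then have h: "length a = 4" "mset a = mset [i,i,0,0]" by (simp_all add: numeral_eq_Suc)
  have s: "set [i,i,0,0] \<subseteq> {i,0}" by auto
  obtain w x y z where a: "a = [w,x,y,z]" and d: "w = i \<or> w = 0" "x = i \<or> x = 0" "y = i \<or> y = 0" "z = i \<or> z = 0"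
    and c: "count_list [w,x,y,z] i = count_list [i,i,0,0] i" "count_list [w,x,y,z] 0 = count_list [i,i,0,0] 0"
    by (rule mem4[OF h s])
  show "a \<in> {[i,i,0,0],[i,0,i,0],[i,0,0,i],[0,i,i,0],[0,i,0,i],[0,0,i,i]}"
    using d c assms unfolding a by (elim disjE; simp)
qed (auto simp: numeral_eq_Suc)

lemma set3: assumes "i \<noteq> 0"
  shows "{a. length a = 4 \<and> mset a = mset ([i,i,i] @ replicate (4 - length [i,i,i]) 0)} =
     {[i,i,i,0],[i,i,0,i],[i,0,i,i],[0,i,i,i]}"
proof (rule set_eqI, rule iffI)
  fix a assume "a \<in> {a. length a = 4 \<and> mset a = mset ([i,i,i] @ replicate (4 - length [i,i,i]) 0)}"
  then have h: "length a = 4" "mset a = mset [i,i,i,0]" by (simp_all add: numeral_eq_Suc)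
  have s: "set [i,i,i,0] \<subseteq> {i,0}" by auto
  obtain w x y z where a: "a = [w,x,y,z]" and d: "w = i \<or> w = 0" "x = i \<or> x = 0" "y = i \<or> y = 0" "z = i \<or> z = 0"
    and c: "count_list [w,x,y,z] i = count_list [i,i,i,0] i" "count_list [w,x,y,z] 0 = count_list [i,i,i,0] 0"
    by (rule mem4[OF h s])
  show "a \<in> {[i,i,i,0],[i,i,0,i],[i,0,i,i],[0,i,i,i]}"
    using d c assms unfolding a by (elim disjE; simp)
qed (auto simp: numeral_eq_Suc)

lemma JMs: "JM (Suc 0) = absv (jmc 1)" "JM 1 = absv (jmc 1)" "JM 2 = absv (jmc 2)" "JM 3 = absv (jmc 3)" "JM 4 = absv (jmc 4)"
  by (simp_all add: JM_absv)

lemma pairA: "cmul x y = cmul y x \<Longrightarrow> gmul (gpow (absv x) n) (gpow (absv y) n) = gpow (absv (cmul x y)) n"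
  by (simp add: gpow_pair gmul_absv)

lemma tripleA: "cmul y z = cmul z y \<Longrightarrow> cmul x (cmul y z) = cmul (cmul y z) x \<Longrightarrow>
  gmul (gpow (absv x) n) (gmul (gpow (absv y) n) (gpow (absv z) n)) = gpow (absv (cmul x (cmul y z))) n"
  by (simp add: pairA)

lemma recur: "chk cs (powsfrom x onec (d+1)) \<Longrightarrow> length cs = d \<Longrightarrow>
  gpow (absv x) (d+m+1) = (\<lambda>s. \<Sum>l<d. cs!l * gpow (absv x) (l+m+1) s)"
  by (rule gpow_rec, rule base)

lemma msym1: assumes "i \<noteq> 0"
  shows "msym [i] = (\<lambda>s. gpow (absv (jmc 1)) i s + gpow (absv (jmc 2)) i s + gpow (absv (jmc 3)) i s + gpow (absv (jmc 4)) i s)"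
  unfolding msym_def set1[OF assms] using assms
  by (simp add: JMmono4 gmul_gone_left gmul_gone_right JMs add.assoc)

lemma msym2: assumes "i \<noteq> 0"
  shows "msym [i,i] = (\<lambda>s. gmul (gpow (absv (jmc 1)) i) (gpow (absv (jmc 2)) i) s
    + gmul (gpow (absv (jmc 1)) i) (gpow (absv (jmc 3)) i) s
    + gmul (gpow (absv (jmc 1)) i) (gpow (absv (jmc 4)) i) s
    + gmul (gpow (absv (jmc 2)) i) (gpow (absv (jmc 3)) i) s
    + gmul (gpow (absv (jmc 2)) i) (gpow (absv (jmc 4)) i) s
    + gmul (gpow (absv (jmc 3)) i) (gpow (absv (jmc 4)) i) s)"
  unfolding msym_def set2[OF assms] using assms
  by (simp add: JMmono4 gmul_gone_left gmul_gone_right JMs add.assoc)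

lemma msym3: assumes "i \<noteq> 0"
  shows "msym [i,i,i] = (\<lambda>s. gmul (gpow (absv (jmc 1)) i) (gmul (gpow (absv (jmc 2)) i) (gpow (absv (jmc 3)) i)) s
    + gmul (gpow (absv (jmc 1)) i) (gmul (gpow (absv (jmc 2)) i) (gpow (absv (jmc 4)) i)) s
    + gmul (gpow (absv (jmc 1)) i) (gmul (gpow (absv (jmc 3)) i) (gpow (absv (jmc 4)) i)) s
    + gmul (gpow (absv (jmc 2)) i) (gmul (gpow (absv (jmc 3)) i) (gpow (absv (jmc 4)) i)) s)"
  unfolding msym_def set3[OF assms] using assms
  by (simp add: JMmono4 gmul_gone_left gmul_gone_right JMs add.assoc)



lemma chk1_1: "chk [36,0,-49,0,14,0] (powsfrom (jmc 1) onec 7)" by code_simp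
lemma chk1_2: "chk [36,0,-49,0,14,0] (powsfrom (jmc 2) onec 7)" by code_simp
lemma chk1_3: "chk [36,0,-49,0,14,0] (powsfrom (jmc 3) onec 7)" by code_simp
lemma chk1_4: "chk [36,0,-49,0,14,0] (powsfrom (jmc 4) onec 7)" by code_simp
lemma com2_12: "cmul (jmc 1) (jmc 2) = cmul (jmc 2) (jmc 1)" by code_simp
lemma chk2_12: "chk [72,36,-50,-5,8] (powsfrom (cmul (jmc 1) (jmc 2)) onec 6)" by code_simp
lemma com2_13: "cmul (jmc 1) (jmc 3) = cmul (jmc 3) (jmc 1)" by code_simp
lemma chk2_13: "chk [72,36,-50,-5,8] (powsfrom (cmul (jmc 1) (jmc 3)) onec 6)" by code_simp
lemma com2_14: "cmul (jmc 1) (jmc 4) = cmul (jmc 4) (jmc 1)" by code_simp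
lemma chk2_14: "chk [72,36,-50,-5,8] (powsfrom (cmul (jmc 1) (jmc 4)) onec 6)" by code_simp
lemma com2_23: "cmul (jmc 2) (jmc 3) = cmul (jmc 3) (jmc 2)" by code_simp
lemma chk2_23: "chk [72,36,-50,-5,8] (powsfrom (cmul (jmc 2) (jmc 3)) onec 6)" by code_simp
lemma com2_24: "cmul (jmc 2) (jmc 4) = cmul (jmc 4) (jmc 2)" by code_simp
lemma chk2_24: "chk [72,36,-50,-5,8] (powsfrom (cmul (jmc 2) (jmc 4)) onec 6)" by code_simp
lemma com2_34: "cmul (jmc 3) (jmc 4) = cmul (jmc 4) (jmc 3)" by code_simp
lemma chk2_34: "chk [72,36,-50,-5,8] (powsfrom (cmul (jmc 3) (jmc 4)) onec 6)" by code_simp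
lemma com3a_123: "cmul (jmc 1) (cmul (jmc 2) (jmc 3)) = cmul (cmul (jmc 2) (jmc 3)) (jmc 1)" by code_simp
lemma chk3_123: "chk [-144,0,40,0] (powsfrom (cmul (jmc 1) (cmul (jmc 2) (jmc 3))) onec 5)" by code_simp
lemma com3a_124: "cmul (jmc 1) (cmul (jmc 2) (jmc 4)) = cmul (cmul (jmc 2) (jmc 4)) (jmc 1)" by code_simp
lemma chk3_124: "chk [-144,0,40,0] (powsfrom (cmul (jmc 1) (cmul (jmc 2) (jmc 4))) onec 5)" by code_simp
lemma com3a_134: "cmul (jmc 1) (cmul (jmc 3) (jmc 4)) = cmul (cmul (jmc 3) (jmc 4)) (jmc 1)" by code_simp
lemma chk3_134: "chk [-144,0,40,0] (powsfrom (cmul (jmc 1) (cmul (jmc 3) (jmc 4))) onec 5)" by code_simp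
lemma com3a_234: "cmul (jmc 2) (cmul (jmc 3) (jmc 4)) = cmul (cmul (jmc 3) (jmc 4)) (jmc 2)" by code_simp
lemma chk3_234: "chk [-144,0,40,0] (powsfrom (cmul (jmc 2) (cmul (jmc 3) (jmc 4))) onec 5)" by code_simp

lemma sum_lt6: "(\<Sum>l<6::nat. f l) = f 0 + f 1 + f 2 + f 3 + f 4 + (f 5::int)"
  by (simp add: lessThan_nat_numeral)
lemma sum_lt5: "(\<Sum>l<5::nat. f l) = f 0 + f 1 + f 2 + f 3 + (f 4::int)"
  by (simp add: lessThan_nat_numeral)
lemma sum_lt4: "(\<Sum>l<4::nat. f l) = f 0 + f 1 + f 2 + (f 3::int)"
  by (simp add: lessThan_nat_numeral)

lemma rec_s: assumes "chk [36,0,-49,0,14,0] (powsfrom x onec 7)"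
  shows "gpow (absv x) (m+7) s = 36 * gpow (absv x) (m+1) s - 49 * gpow (absv x) (m+3) s + 14 * gpow (absv x) (m+5) s"
proof -
  have "gpow (absv x) (6+m+1) = (\<lambda>s. \<Sum>l<6. [36,0,-49,0,14,0]!l * gpow (absv x) (l+m+1) s)"
    by (rule recur) (use assms in simp_all)
  from fun_cong[OF this, of s] show ?thesis by (simp add: sum_lt6 eval_nat_numeral del: gpow.simps)
qed

lemma rec_p: assumes "chk [72,36,-50,-5,8] (powsfrom x onec 6)"
  shows "gpow (absv x) (m+6) s = 72 * gpow (absv x) (m+1) s + 36 * gpow (absv x) (m+2) s
     - 50 * gpow (absv x) (m+3) s - 5 * gpow (absv x) (m+4) s + 8 * gpow (absv x) (m+5) s"
proof -
  have "gpow (absv x) (5+m+1) = (\<lambda>s. \<Sum>l<5. [72,36,-50,-5,8]!l * gpow (absv x) (l+m+1) s)"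
    by (rule recur) (use assms in simp_all)
  from fun_cong[OF this, of s] show ?thesis by (simp add: sum_lt5 eval_nat_numeral del: gpow.simps)
qed

lemma rec_t: assumes "chk [-144,0,40,0] (powsfrom x onec 5)"
  shows "gpow (absv x) (m+5) s = - 144 * gpow (absv x) (m+1) s + 40 * gpow (absv x) (m+3) s"
proof -
  have "gpow (absv x) (4+m+1) = (\<lambda>s. \<Sum>l<4. [-144,0,40,0]!l * gpow (absv x) (l+m+1) s)"
    by (rule recur) (use assms in simp_all)
  from fun_cong[OF this, of s] show ?thesis by (simp add: sum_lt4 eval_nat_numeral del: gpow.simps)
qed

theorem lemma2p2:
  shows "(\<forall>i::nat. i \<ge> 7 \<longrightarrow>
           msym [i] = (\<lambda>s. 14 * msym [i-2] s - 49 * msym [i-4] s + 36 * msym [i-6] s))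
    \<and> (\<forall>i::nat. i \<ge> 6 \<longrightarrow>
           msym [i,i] = (\<lambda>s. 8 * msym [i-1,i-1] s - 5 * msym [i-2,i-2] s - 50 * msym [i-3,i-3] s
                             + 36 * msym [i-4,i-4] s + 72 * msym [i-5,i-5] s))
    \<and> (\<forall>i::nat. i \<ge> 5 \<longrightarrow>
           msym [i,i,i] = (\<lambda>s. 40 * msym [i-2,i-2,i-2] s - 144 * msym [i-4,i-4,i-4] s))"
proof (intro conjI allI impI)
  fix i :: nat assume i: "7 \<le> i"
  define m where "m = i - 7"
  have im: "i = m+7" using i by (simp add: m_def)
  have e: "m+7-2 = m+5" "m+7-4 = m+3" "m+7-6 = m+1" by simp_all
  have nz: "m+7 \<noteq> 0" "m+5 \<noteq> 0" "m+3 \<noteq> 0" "m+1 \<noteq> 0" by simp_all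
  show "msym [i] = (\<lambda>s. 14 * msym [i-2] s - 49 * msym [i-4] s + 36 * msym [i-6] s)"
    unfolding im unfolding e msym1[OF nz(1)] msym1[OF nz(2)] msym1[OF nz(3)] msym1[OF nz(4)]
    unfolding rec_s[OF chk1_1] rec_s[OF chk1_2] rec_s[OF chk1_3] rec_s[OF chk1_4] by (rule ext) (simp add: algebra_simps)
next
  fix i :: nat assume i: "6 \<le> i"
  define m where "m = i - 6"
  have im: "i = m+6" using i by (simp add: m_def)
  have e: "m+6-1 = m+5" "m+6-2 = m+4" "m+6-3 = m+3" "m+6-4 = m+2" "m+6-5 = m+1" by simp_all
  have nz: "m+6 \<noteq> 0" "m+5 \<noteq> 0" "m+4 \<noteq> 0" "m+3 \<noteq> 0" "m+2 \<noteq> 0" "m+1 \<noteq> 0" by simp_all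
  show "msym [i,i] = (\<lambda>s. 8 * msym [i-1,i-1] s - 5 * msym [i-2,i-2] s - 50 * msym [i-3,i-3] s
                             + 36 * msym [i-4,i-4] s + 72 * msym [i-5,i-5] s)"
    unfolding im unfolding e msym2[OF nz(1)] msym2[OF nz(2)] msym2[OF nz(3)] msym2[OF nz(4)] msym2[OF nz(5)] msym2[OF nz(6)]
      pairA[OF com2_12] pairA[OF com2_13] pairA[OF com2_14] pairA[OF com2_23] pairA[OF com2_24] pairA[OF com2_34]
    unfolding rec_p[OF chk2_12] rec_p[OF chk2_13] rec_p[OF chk2_14] rec_p[OF chk2_23] rec_p[OF chk2_24] rec_p[OF chk2_34] by (rule ext) (simp add: algebra_simps)
next
  fix i :: nat assume i: "5 \<le> i"
  define m where "m = i - 5"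
  have im: "i = m+5" using i by (simp add: m_def)
  have e: "m+5-2 = m+3" "m+5-4 = m+1" by simp_all
  have nz: "m+5 \<noteq> 0" "m+3 \<noteq> 0" "m+1 \<noteq> 0" by simp_all
  show "msym [i,i,i] = (\<lambda>s. 40 * msym [i-2,i-2,i-2] s - 144 * msym [i-4,i-4,i-4] s)"
    unfolding im unfolding e msym3[OF nz(1)] msym3[OF nz(2)] msym3[OF nz(3)] tripleA[OF com2_23 com3a_123] tripleA[OF com2_24 com3a_124] tripleA[OF com2_34 com3a_134] tripleA[OF com2_34 com3a_234]
    unfolding rec_t[OF chk3_123] rec_t[OF chk3_124] rec_t[OF chk3_134] rec_t[OF chk3_234] by (rule ext) (simp add: algebra_simps)
qed


end
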